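(* For $n\ge 4$, let $\Phi_n$ be the set of all graphs on $n$ vertices with non-negative integer weights on their edges such that every subgraph spanned by at least $4$ vertices has total weight at least $3$, and let $\phi_n$ be the minimum total weight among all graphs in $\Phi_n$. Then $$\phi_n=\left\lceil\tfrac{1}{3}n(n-2)\right\rceil.$$
   Context: The total weight of a (sub)graph is the sum of the weights of its edges; the subgraph spanned by a set of vertices consists of those vertices and all edges between them. *)

theory Defs
  imports Complex_Main
begin

text \<open>A weighted graph on the vertex set {0..<n}: a weight function w assigning to each
  unordered pair {i,j} (represented by i < j) a non-negative integer w i j
  (weight 0 = no edge). Values of w at pairs outside {0..<n} or with i >= j are irrelevant.\<close>

definition span_weight :: "(nat \<Rightarrow> nat \<Rightarrow> nat) \<Rightarrow> nat set \<Rightarrow> nat" where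
  "span_weight w S = (\<Sum>p \<in> {(i, j). i \<in> S \<and> j \<in> S \<and> i < j}. w (fst p) (snd p))"

definition Phi :: "nat \<Rightarrow> (nat \<Rightarrow> nat \<Rightarrow> nat) set" where
  "Phi n = {w. \<forall>S. S \<subseteq> {..<n} \<and> card S \<ge> 4 \<longrightarrow> span_weight w S \<ge> 3}"

definition phi :: "nat \<Rightarrow> nat" where
  "phi n = Inf {span_weight w {..<n} | w. w \<in> Phi n}"

end

theory Submission
  imports Defs
begin


definition WW :: "(nat \<Rightarrow> nat \<Rightarrow> nat) \<Rightarrow> nat \<Rightarrow> nat \<Rightarrow> nat" where
  "WW w x y = (if x < y then w x y else w y x)"

lemma WW_sym: "WW w x y = WW w y x"
  unfolding WW_def by (cases x y rule: linorder_cases) auto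

lemma span_empty[simp]: "span_weight w {} = 0"
  unfolding span_weight_def by simp

lemma span_insert:
  assumes "finite S" "x \<notin> S"
  shows "span_weight w (insert x S) = span_weight w S + (\<Sum>y\<in>S. WW w x y)"
proof -
  define P where "P = (\<lambda>S. {(i, j). i \<in> S \<and> j \<in> S \<and> (i::nat) < j})"
  have finP: "finite (P S)" unfolding P_def
    by (rule finite_subset[of _ "S \<times> S"]) (use assms in auto)
  have eq: "P (insert x S) = P S \<union> (Pair x ` {y\<in>S. x < y} \<union> (\<lambda>y. (y, x)) ` {y\<in>S. y < x})"
    unfolding P_def by auto
  have d1: "P S \<inter> (Pair x ` {y\<in>S. x < y} \<union> (\<lambda>y. (y, x)) ` {y\<in>S. y < x}) = {}"
    unfolding P_def using assms by auto
  have d2: "Pair x ` {y\<in>S. x < y} \<inter> (\<lambda>y. (y, x)) ` {y\<in>S. y < x} = {}" by auto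
  have "span_weight w (insert x S) = (\<Sum>p\<in>P (insert x S). w (fst p) (snd p))"
    unfolding span_weight_def P_def by simp
  also have "\<dots> = (\<Sum>p\<in>P S. w (fst p) (snd p))
      + ((\<Sum>p\<in>Pair x ` {y\<in>S. x < y}. w (fst p) (snd p)) + (\<Sum>p\<in>(\<lambda>y. (y, x)) ` {y\<in>S. y < x}. w (fst p) (snd p)))"
    unfolding eq using finP d1 d2 assms(1)
    by (simp add: sum.union_disjoint)
  also have "(\<Sum>p\<in>Pair x ` {y\<in>S. x < y}. w (fst p) (snd p)) = (\<Sum>y\<in>{y\<in>S. x < y}. w x y)"
    by (subst sum.reindex) (auto simp: inj_on_def)
  also have "(\<Sum>p\<in>(\<lambda>y. (y, x)) ` {y\<in>S. y < x}. w (fst p) (snd p)) = (\<Sum>y\<in>{y\<in>S. y < x}. w y x)"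
    by (subst sum.reindex) (auto simp: inj_on_def)
  also have "(\<Sum>y\<in>{y\<in>S. x < y}. w x y) + (\<Sum>y\<in>{y\<in>S. y < x}. w y x) = (\<Sum>y\<in>S. WW w x y)"
  proof -
    have "(\<Sum>y\<in>S. WW w x y) = (\<Sum>y\<in>S. if x < y then w x y else w y x)" unfolding WW_def by simp
    also have "\<dots> = (\<Sum>y\<in>S \<inter> {y. x < y}. w x y) + (\<Sum>y\<in>S \<inter> - {y. x < y}. w y x)"
      by (rule sum.If_cases) (rule assms(1))
    also have "S \<inter> - {y. x < y} = {y\<in>S. y < x}" using assms(2) by (auto simp: not_less order.order_iff_strict)
    also have "S \<inter> {y. x < y} = {y\<in>S. x < y}" by auto
    finally show ?thesis by simp
  qed
  finally show ?thesis unfolding span_weight_def P_def by simp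
qed

lemma span_mono:
  assumes "finite S" "T \<subseteq> S"
  shows "span_weight w T \<le> span_weight w S"
  unfolding span_weight_def
  by (rule sum_mono2) (use assms in \<open>auto intro: finite_subset[of _ "S \<times> S"]\<close>)

lemma span3:
  assumes "a \<noteq> b" "a \<noteq> c" "b \<noteq> c"
  shows "span_weight w {a, b, c} = WW w a b + WW w a c + WW w b c"
  using assms by (simp add: span_insert)

lemma span4:
  assumes "a \<noteq> b" "a \<noteq> c" "b \<noteq> c" "a \<noteq> d" "b \<noteq> d" "c \<noteq> d"
  shows "span_weight w {a, b, c, d} = WW w a b + WW w a c + WW w a d + WW w b c + WW w b d + WW w c d"
  using assms by (simp add: span_insert)

lemma span_ins3:
  assumes "finite R" "a \<notin> R" "b \<notin> R" "c \<notin> R" "a \<noteq> b" "a \<noteq> c" "b \<noteq> c"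
  shows "span_weight w (insert a (insert b (insert c R))) =
     span_weight w R + (\<Sum>y\<in>R. WW w a y + WW w b y + WW w c y) + (WW w a b + WW w a c + WW w b c)"
  using assms by (simp add: span_insert sum.distrib WW_sym)


definition ff :: "nat \<Rightarrow> nat" where "ff n = (n*(n-2)+2) div 3"

lemma ff_step: "2 \<le> m \<Longrightarrow> ff (m+3) = ff m + 2*m + 1"
proof -
  assume "2 \<le> m"
  then obtain j where j: "m = j + 2" by (metis add.commute le_Suc_ex)
  have "(m+3)*(m+3-2)+2 = (m*(m-2)+2) + 3*(2*m+1)" unfolding j by (simp add: algebra_simps)
  then show ?thesis unfolding ff_def by simp
qed

lemma arith_main:
  fixes n C m sp :: nat
  assumes "4 \<le> n" "(n-3)*(3-m) \<le> C" "(n-3)*m \<le> C"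
    "7 \<le> n \<Longrightarrow> ff (n-3) \<le> sp" "n = 6 \<Longrightarrow> m \<le> sp"
  shows "ff n \<le> sp + C + m"
proof -
  have C2: "2*(n-3) \<le> C"
  proof (cases "m \<le> 1")
    case True
    then have "2 \<le> 3 - m" by simp
    then have "(n-3)*2 \<le> (n-3)*(3-m)" by (rule mult_le_mono2)
    then show ?thesis using assms(2) by (metis le_trans mult.commute)
  next
    case False
    then have "(n-3)*2 \<le> (n-3)*m" by (intro mult_le_mono2) simp
    then show ?thesis using assms(3) by (metis le_trans mult.commute)
  qed
  consider "n = 4" | "n = 5" | "n = 6" | "7 \<le> n" using assms(1) by linarith
  then show ?thesis
  proof cases
    case 1
    then show ?thesis using assms(2,3) by (cases "m = 0"; cases "m = 1") (auto simp: ff_def)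
  next
    case 2
    then show ?thesis using assms(2,3) by (cases "m = 0"; cases "m = 1") (auto simp: ff_def)
  next
    case 3
    then show ?thesis using assms(2,3,5) by (cases "m = 0"; cases "m = 1") (auto simp: ff_def)
  next
    case 4
    have "ff n = ff (n-3) + 2*(n-3) + 1" using ff_step[of "n-3"] 4 by simp
    moreover have "1 \<le> m \<or> 3*(n-3) \<le> C" using assms(2) by (cases "m = 0") auto
    ultimately show ?thesis using assms(4)[OF 4] C2 4 by (elim disjE) linarith+
  qed
qed

lemma three_elems:
  assumes "finite S" "3 \<le> card S"
  obtains a b c where "a \<in> S" "b \<in> S" "c \<in> S" "a \<noteq> b" "a \<noteq> c" "b \<noteq> c"
proof -
  obtain T where "T \<subseteq> S" "card T = 3" using obtain_subset_with_card_n[OF assms(2)] by blast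
  then show ?thesis using that by (auto simp: card_3_iff)
qed

lemma lower:
  "finite S \<Longrightarrow> card S = n \<Longrightarrow> 4 \<le> n \<Longrightarrow> (\<forall>T\<subseteq>S. card T = 4 \<longrightarrow> 3 \<le> span_weight w T)
   \<Longrightarrow> ff n \<le> span_weight w S"
proof (induction n arbitrary: S rule: less_induct)
  case (less n S)
  note fin = less.prems(1) and cardS = less.prems(2) and n4 = less.prems(3) and P = less.prems(4)
  obtain a0 b0 c0 where "a0 \<in> S" "b0 \<in> S" "c0 \<in> S" "a0 \<noteq> b0" "a0 \<noteq> c0" "b0 \<noteq> c0"
    using three_elems[OF fin] cardS n4 by auto
  define Q where "Q = (\<lambda>(a,b,c). a \<in> S \<and> b \<in> S \<and> c \<in> S \<and> a \<noteq> b \<and> a \<noteq> c \<and> b \<noteq> c)"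
  define mm where "mm = (\<lambda>(a,b,c). WW w a b + WW w a c + WW w b c)"
  have "Q (a0, b0, c0)" unfolding Q_def using \<open>a0 \<in> S\<close> \<open>b0 \<in> S\<close> \<open>c0 \<in> S\<close> \<open>a0 \<noteq> b0\<close> \<open>a0 \<noteq> c0\<close> \<open>b0 \<noteq> c0\<close> by simp
  from ex_has_least_nat[of Q, OF this, of mm] obtain t where t: "Q t" "\<forall>y. Q y \<longrightarrow> mm t \<le> mm y" by blast
  obtain a b c where abc: "t = (a, b, c)" by (cases t) auto
  define m0 where "m0 = WW w a b + WW w a c + WW w b c"
  have inS: "a \<in> S" "b \<in> S" "c \<in> S" and dist: "a \<noteq> b" "a \<noteq> c" "b \<noteq> c"
    using t(1) unfolding abc Q_def by auto
  have minim: "m0 \<le> WW w x y + WW w x z + WW w y z"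
    if "x \<in> S" "y \<in> S" "z \<in> S" "x \<noteq> y" "x \<noteq> z" "y \<noteq> z" for x y z
    using t(2)[rule_format, of "(x,y,z)"] that unfolding abc Q_def mm_def m0_def by simp
  define R where "R = S - {a, b, c}"
  have finR: "finite R" using fin unfolding R_def by simp
  have SR: "S = insert a (insert b (insert c R))" using inS unfolding R_def by auto
  have cardR: "card R = n - 3" unfolding R_def using fin inS dist cardS
    by (simp add: card_Diff_subset)
  have notR: "a \<notin> R" "b \<notin> R" "c \<notin> R" unfolding R_def by auto
  define C where "C = (\<Sum>y\<in>R. WW w a y + WW w b y + WW w c y)"
  have split: "span_weight w S = span_weight w R + C + m0"
    unfolding SR C_def m0_def by (rule span_ins3[OF finR notR dist])
  have lb1: "3 - m0 \<le> WW w a y + WW w b y + WW w c y" if "y \<in> R" for y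
  proof -
    have yS: "y \<in> S" and yd: "y \<noteq> a" "y \<noteq> b" "y \<noteq> c" using that unfolding R_def by auto
    have "card {a, b, c, y} = 4" using dist yd by auto
    moreover have "{a, b, c, y} \<subseteq> S" using inS yS by auto
    ultimately have "3 \<le> span_weight w {a, b, c, y}" using P by blast
    also have "\<dots> = m0 + (WW w a y + WW w b y + WW w c y)"
      using dist yd unfolding m0_def by (subst span4) auto
    finally show ?thesis by simp
  qed
  have lb2: "m0 \<le> WW w a y + WW w b y + WW w c y" if "y \<in> R" for y
  proof -
    have yS: "y \<in> S" and yd: "y \<noteq> a" "y \<noteq> b" "y \<noteq> c" using that unfolding R_def by auto
    have "m0 \<le> WW w a b + WW w a y + WW w b y" using minim[of a b y] inS yS dist yd by auto
    moreover have "m0 \<le> WW w a c + WW w a y + WW w c y" using minim[of a c y] inS yS dist yd by auto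
    moreover have "m0 \<le> WW w b c + WW w b y + WW w c y" using minim[of b c y] inS yS dist yd by auto
    ultimately show ?thesis unfolding m0_def by linarith
  qed
  have C1: "(n-3)*(3-m0) \<le> C"
    using sum_bounded_below[of R "3 - m0" "\<lambda>y. WW w a y + WW w b y + WW w c y"] lb1 cardR
    unfolding C_def by simp
  have C2: "(n-3)*m0 \<le> C"
    using sum_bounded_below[of R m0 "\<lambda>y. WW w a y + WW w b y + WW w c y"] lb2 cardR
    unfolding C_def by simp
  have IH: "ff (n-3) \<le> span_weight w R" if "7 \<le> n"
  proof (rule less.IH[of "n-3" R])
    show "n - 3 < n" using that by simp
    show "4 \<le> n - 3" using that by simp
    show "\<forall>T\<subseteq>R. card T = 4 \<longrightarrow> 3 \<le> span_weight w T" using P SR by blast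
  qed (use finR cardR in auto)
  have six: "m0 \<le> span_weight w R" if "n = 6"
  proof -
    have "card R = 3" using cardR that by simp
    then obtain x y z where R3: "R = {x, y, z}" "x \<noteq> y" "x \<noteq> z" "y \<noteq> z" by (auto simp: card_3_iff)
    have "x \<in> S" "y \<in> S" "z \<in> S" using R3 SR by auto
    then show ?thesis using minim[of x y z] R3 by (simp add: span3)
  qed
  show ?case unfolding split
    by (rule arith_main[OF n4 C1 C2 IH six])
qed


definition w0 :: "nat \<Rightarrow> nat \<Rightarrow> nat \<Rightarrow> nat" where
  "w0 b i j = (if j < b then 2 else if b \<le> i then 1 else 0)"

lemma WW_w0: "x \<noteq> y \<Longrightarrow> WW (w0 b) x y = (if x < b \<and> y < b then 2 else if b \<le> x \<and> b \<le> y then 1 else 0)"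
  unfolding WW_def w0_def by auto

lemma w0_Phi: "w0 b \<in> Phi n"
  unfolding Phi_def
proof (intro CollectI allI impI, elim conjE)
  fix S assume S: "S \<subseteq> {..<n}" "4 \<le> card S"
  have fin: "finite S" using S(1) finite_subset by blast
  obtain T where T: "T \<subseteq> S" "card T = 4" using obtain_subset_with_card_n[OF S(2)] by blast
  then have "card T = Suc 3" by simp
  then obtain a B where aB: "T = insert a B" "a \<notin> B" "card B = 3"
    unfolding card_Suc_eq by blast
  then obtain x y z where B: "B = {x, y, z}" "x \<noteq> y" "x \<noteq> z" "y \<noteq> z" by (auto simp: card_3_iff)
  have T4: "T = {a, x, y, z}" using aB B by simp
  have d: "a \<noteq> x" "a \<noteq> y" "a \<noteq> z" using aB B by auto
  have "3 \<le> span_weight (w0 b) {a, x, y, z}"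
    using B(2-4) d by (cases "a < b"; cases "x < b"; cases "y < b"; cases "z < b") (simp_all add: span4 WW_w0)
  also have "\<dots> \<le> span_weight (w0 b) S" using span_mono[OF fin] T T4 by simp
  finally show "3 \<le> span_weight (w0 b) S" .
qed

lemma w0_total: "2 * span_weight (w0 b) {..<k} =
   (if k \<le> b then 2*k*(k-1) else 2*b*(b-1) + (k-b)*(k-b-1))"
proof (induction k)
  case 0
  then show ?case by simp
next
  case (Suc k)
  have ins: "{..<Suc k} = insert k {..<k}" by auto
  have "span_weight (w0 b) {..<Suc k} = span_weight (w0 b) {..<k} + (\<Sum>y<k. WW (w0 b) k y)"
    unfolding ins by (rule span_insert) auto
  moreover have "(\<Sum>y<k. WW (w0 b) k y) = (if k < b then 2*k else k - b)"
  proof (cases "k < b")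
    case True
    then have "(\<Sum>y<k. WW (w0 b) k y) = (\<Sum>y<k. 2)" by (intro sum.cong) (auto simp: WW_w0)
    then show ?thesis using True by simp
  next
    case False
    then have "(\<Sum>y<k. WW (w0 b) k y) = (\<Sum>y<k. if b \<le> y then 1 else 0)" by (intro sum.cong) (auto simp: WW_w0)
    also have "\<dots> = (\<Sum>y\<in>{y\<in>{..<k}. b \<le> y}. 1)" by (subst sum.inter_filter) auto
    also have "{y\<in>{..<k}. b \<le> y} = {b..<k}" by auto
    finally show ?thesis using False by simp
  qed
  ultimately have step: "2 * span_weight (w0 b) {..<Suc k} =
      2 * span_weight (w0 b) {..<k} + (if k < b then 4*k else 2*(k-b))" by simp
  show ?case
  proof (cases "k < b")
    case True
    then have "2 * span_weight (w0 b) {..<k} = 2*k*(k-1)" using Suc.IH by simp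
    then show ?thesis using step True by (cases k) (auto simp: algebra_simps)
  next
    case False
    then obtain d where d: "k = b + d" using le_Suc_ex by (metis not_less)
    show ?thesis
    proof (cases d)
      case 0
      then have "2 * span_weight (w0 b) {..<k} = 2*b*(b-1)" using Suc.IH d by simp
      then show ?thesis using step d 0 by simp
    next
      case (Suc e)
      then have "2 * span_weight (w0 b) {..<k} = 2*b*(b-1) + (e+1)*e" using Suc.IH d by simp
      then show ?thesis using step d Suc by (simp add: algebra_simps)
    qed
  qed
qed

lemma w0_value_aux:
  assumes "n = b + c" "b < n" "2*b*(b-1) + c*(c-1) = 2*X" "n*(n-2)+2 = 3*X + r" "r < 3"
  shows "span_weight (w0 b) {..<n} = ff n"
proof -
  have "2 * span_weight (w0 b) {..<n} = 2*X" using w0_total[of b n] assms by simp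
  moreover have "ff n = X" unfolding ff_def using assms(4,5) by simp
  ultimately show ?thesis by simp
qed

lemma w0_value: assumes "4 \<le> n" shows "span_weight (w0 ((n+1) div 3)) {..<n} = ff n"
proof -
  have "\<exists>j. n = 3*j+3 \<or> n = 3*j+4 \<or> n = 3*j+5" using assms by presburger
  then obtain j where "n = 3*j+3 \<or> n = 3*j+4 \<or> n = 3*j+5" by blast
  then consider "n = 3*j+3" | "n = 3*j+4" | "n = 3*j+5" by blast
  then show ?thesis
  proof cases
    case 1
    then have b: "(n+1) div 3 = j+1" by presburger
    show ?thesis unfolding b
      by (rule w0_value_aux[where c="2*j+2" and X="3*j*j+4*j+1" and r=2]) (use 1 in \<open>simp_all add: algebra_simps\<close>)
  next
    case 2
    then have b: "(n+1) div 3 = j+1" by presburger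
    show ?thesis unfolding b
      by (rule w0_value_aux[where c="2*j+3" and X="3*j*j+6*j+3" and r=1]) (use 2 in \<open>simp_all add: algebra_simps\<close>)
  next
    case 3
    then have b: "(n+1) div 3 = j+2" by presburger
    show ?thesis unfolding b
      by (rule w0_value_aux[where c="2*j+3" and X="3*j*j+8*j+5" and r=2]) (use 3 in \<open>simp_all add: algebra_simps\<close>)
  qed
qed

lemma phi_eq: assumes "4 \<le> n" shows "phi n = ff n"
  unfolding phi_def
proof (rule cInf_eq_minimum)
  have "span_weight (w0 ((n+1) div 3)) {..<n} = ff n" by (rule w0_value[OF assms])
  moreover have "w0 ((n+1) div 3) \<in> Phi n" by (rule w0_Phi)
  ultimately show "ff n \<in> {span_weight w {..<n} |w. w \<in> Phi n}"
    by (intro CollectI exI[of _ "w0 ((n+1) div 3)"]) simp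
next
  fix x assume "x \<in> {span_weight w {..<n} |w. w \<in> Phi n}"
  then obtain w where x: "x = span_weight w {..<n}" and w: "w \<in> Phi n" by blast
  have P: "\<forall>T\<subseteq>{..<n}. card T = 4 \<longrightarrow> 3 \<le> span_weight w T"
  proof (intro allI impI)
    fix T assume "T \<subseteq> {..<n}" "card T = 4"
    then show "3 \<le> span_weight w T" using w unfolding Phi_def by simp
  qed
  have "ff n \<le> span_weight w {..<n}"
    by (rule lower[OF _ _ assms P]) simp_all
  then show "ff n \<le> x" unfolding x .
qed

theorem theorem7p5:
  fixes n :: nat
  assumes "n \<ge> 4"
  shows "int (phi n) = \<lceil>real n * (real n - 2) / 3\<rceil>"
proof -
  define x where "x = n * (n - 2)"
  have rx: "real x = real n * (real n - 2)" unfolding x_def using assms by (simp add: of_nat_diff)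
  have 1: "x \<le> 3 * ff n" unfolding ff_def x_def[symmetric] by simp
  have 2: "3 * ff n \<le> x + 2" unfolding ff_def x_def[symmetric] by simp
  have "\<lceil>real n * (real n - 2) / 3\<rceil> = int (ff n)"
  proof (rule ceiling_unique)
    show "real_of_int (int (ff n)) - 1 < real n * (real n - 2) / 3"
      using 2 unfolding rx[symmetric] by (simp add: field_simps)
    show "real n * (real n - 2) / 3 \<le> real_of_int (int (ff n))"
      using 1 unfolding rx[symmetric] by (simp add: field_simps)
  qed
  then show ?thesis using phi_eq[OF assms] by simp
qed

end
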